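(* Let $\lambda$ be a partition, $\nu\in\mathcal{U}(\lambda)$, $(x,y)=\nu/\lambda$, and let $u,v\ge1$ be integers. (1) If $c=(x+u,y)$, then \[ P^{q,t}_\lambda(\nu\mid c)=t^{\ell_\lambda(c)}\frac{1-q}{1-q^{a_\nu(c)+1}t^{\ell_\nu(c)}}\prod_{c'\in{\rm arm}_\lambda(c)\setminus\{\nu/\lambda\}}\frac{1-q^{a_\lambda(c')+1}t^{\ell_\lambda(c')}}{1-q^{a_\nu(c')+1}t^{\ell_\nu(c')}}. \] (2) If $c=(x,y+v)$, then \[ P^{q,t}_\lambda(\nu\mid c)=\frac{1-t}{1-q^{a_\nu(c)}t^{\ell_\nu(c)+1}}\prod_{c''\in{\rm leg}_\lambda(c)\setminus\{\nu/\lambda\}}\frac{1-q^{a_\lambda(c'')}t^{\ell_\lambda(c'')+1}}{1-q^{a_\nu(c'')}t^{\ell_\nu(c'')+1}}. \]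
   Context: Partitions are Young diagrams in French convention: cells $(x,y)\in\mathbb{Z}_{>0}^2$ with $x\le\lambda_y$; $\lambda'$ is the conjugate, with $\lambda_j=0$ for $j>\lambda'_1$, $\lambda'_i=0$ for $i>\lambda_1$. $\mathcal{U}(\lambda)$ is the set of partitions obtained by adding one cell to $\lambda$. For a partition $\kappa$, $\overline{\kappa}=\mathbb{Z}_{>0}^2\setminus\kappa$, and for $c=(x,y)\in\overline{\kappa}$: ${\rm arm}_\kappa(c)=\{(i,y):\kappa_y<i<x\}$, ${\rm leg}_\kappa(c)=\{(x,j):\kappa'_x<j<y\}$, exterior arm-length $a_\kappa(c)=|{\rm arm}_\kappa(c)|$ and exterior leg-length $\ell_\kappa(c)=|{\rm leg}_\kappa(c)|$ (all arm/leg lengths in the statement are these exterior ones; the relevant cells lie outside both $\lambda$ and $\nu$). $c\in\overline{\lambda}$ is an outer corner iff $a_\lambda(c)=\ell_\lambda(c)=0$. For $c'\in{\rm arm}_\lambda(c)\cup{\rm leg}_\lambda(c)$, $P(c\rightarrow c')=q^{a_\lambda(c)-i}\frac{t^{\ell_\lambda(c)}(1-q)}{1-q^{a_\lambda(c)}t^{\ell_\lambda(c)}}$ if $c'=(x-i,y)$, and $P(c\rightarrow c')=t^{j-1}\frac{1-t}{1-q^{a_\lambda(c)}t^{\ell_\lambda(c)}}$ if $c'=(x,y-j)$. The exterior $(q,t)$-hook walk from $c$ terminates if $c$ is an outer corner, otherwise moves to $c'$ with probability $P(c\rightarrow c')$ and repeats; $P^{q,t}_\lambda(\nu\mid c)$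 is the probability (a rational function in $q,t$) that it terminates at the cell $\nu/\lambda$. *)

theory Defs
  imports Main
begin

text \<open>Partitions as weakly decreasing lists of positive parts, French convention:
  the row length of row y (y \<ge> 1) is lambda_y.\<close>

definition is_partition :: "nat list \<Rightarrow> bool" where
  "is_partition lam \<longleftrightarrow> sorted_wrt (\<ge>) lam \<and> 0 \<notin> set lam"

definition row :: "nat list \<Rightarrow> nat \<Rightarrow> nat" where
  "row lam y = (if 1 \<le> y \<and> y \<le> length lam then lam ! (y - 1) else 0)"

definition conj :: "nat list \<Rightarrow> nat \<Rightarrow> nat" where
  "conj lam x = length (filter (\<lambda>r. x \<le> r) lam)"

definition cells :: "nat list \<Rightarrow> (nat \<times> nat) set" where
  "cells lam = {(x, y). 1 \<le> x \<and> 1 \<le> y \<and> x \<le> row lam y}"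

definition in_U :: "nat list \<Rightarrow> nat list \<Rightarrow> bool" where
  "in_U lam nu \<longleftrightarrow> is_partition nu \<and> cells lam \<subseteq> cells nu \<and> card (cells nu - cells lam) = 1"

definition arm :: "nat list \<Rightarrow> nat \<times> nat \<Rightarrow> (nat \<times> nat) set" where
  "arm kap c = {(i, snd c) | i. row kap (snd c) < i \<and> i < fst c}"

definition leg :: "nat list \<Rightarrow> nat \<times> nat \<Rightarrow> (nat \<times> nat) set" where
  "leg kap c = {(fst c, j) | j. conj kap (fst c) < j \<and> j < snd c}"

definition armlen :: "nat list \<Rightarrow> nat \<times> nat \<Rightarrow> nat" where
  "armlen kap c = card (arm kap c)"

definition leglen :: "nat list \<Rightarrow> nat \<times> nat \<Rightarrow> nat" where
  "leglen kap c = card (leg kap c)"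

text \<open>Transition probability P(c \<rightarrow> c') of the exterior (q,t)-hook walk
  (only meaningful for c' in the arm or leg of c).\<close>
definition trans_prob :: "nat list \<Rightarrow> 'a::field \<Rightarrow> 'a \<Rightarrow> nat \<times> nat \<Rightarrow> nat \<times> nat \<Rightarrow> 'a" where
  "trans_prob lam q t c c' =
     (let a = armlen lam c; l = leglen lam c in
      if snd c' = snd c
      then q ^ (a - (fst c - fst c')) * t ^ l * (1 - q) / (1 - q ^ a * t ^ l)
      else t ^ (snd c - snd c' - 1) * (1 - t) / (1 - q ^ a * t ^ l))"

text \<open>hook_walk lam q t c d = probability that the exterior (q,t)-hook walk
  started at c terminates at the cell d.\<close>
function hook_walk :: "nat list \<Rightarrow> 'a::field \<Rightarrow> 'a \<Rightarrow> nat \<times> nat \<Rightarrow> nat \<times> nat \<Rightarrow> 'a" where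
  "hook_walk lam q t c d =
     (if armlen lam c = 0 \<and> leglen lam c = 0 then (if d = c then 1 else 0)
      else (\<Sum>c'\<in>arm lam c \<union> leg lam c. trans_prob lam q t c c' * hook_walk lam q t c' d))"
  by pat_completeness auto
termination
  by (relation "measure (\<lambda>(lam, q, t, c, d). fst c + snd c)")
     (auto simp: arm_def leg_def)

end

theory Submission
  imports Defs
begin

declare hook_walk.simps[simp del]

lemma arm_eq: "arm kap c = (\<lambda>i. (i, snd c)) ` {row kap (snd c)<..<fst c}"
  by (auto simp: arm_def)
lemma leg_eq: "leg kap c = (\<lambda>j. (fst c, j)) ` {conj kap (fst c)<..<snd c}"
  by (auto simp: leg_def)
lemma armlen_eq: "armlen kap c = fst c - Suc (row kap (snd c))"
  by (simp add: armlen_def arm_eq card_image inj_on_def)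
lemma leglen_eq: "leglen kap c = snd c - Suc (conj kap (fst c))"
  by (simp add: leglen_def leg_eq card_image inj_on_def)
lemma finite_arm: "finite (arm kap c)" by (simp add: arm_eq)
lemma finite_leg: "finite (leg kap c)" by (simp add: leg_eq)

lemma row_mono:
  assumes "is_partition kap" "1 \<le> a" "a \<le> b"
  shows "row kap b \<le> row kap a"
proof (cases "b \<le> length kap")
  case True
  have s: "sorted_wrt (\<ge>) kap" using assms(1) by (simp add: is_partition_def)
  show ?thesis
  proof (cases "a = b")
    case False
    then have "a - 1 < b - 1" using assms by linarith
    with s True have "kap ! (a - 1) \<ge> kap ! (b - 1)"
      by (simp add: sorted_wrt_iff_nth_less)
    then show ?thesis using True assms by (simp add: row_def)
  qed simp
next
  case False
  then show ?thesis by (simp add: row_def)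
qed

lemma conj_card:
  assumes "1 \<le> x'"
  shows "conj kap x' = card {y'. 1 \<le> y' \<and> x' \<le> row kap y'}"
proof -
  have "{y'. 1 \<le> y' \<and> x' \<le> row kap y'} = Suc ` {i. i < length kap \<and> x' \<le> kap ! i}"
  proof (rule set_eqI, rule iffI)
    fix y' assume "y' \<in> {y'. 1 \<le> y' \<and> x' \<le> row kap y'}"
    then have h: "1 \<le> y'" "x' \<le> row kap y'" by auto
    then have "y' \<le> length kap" "x' \<le> kap ! (y' - 1)" using assms
      by (auto simp: row_def split: if_splits)
    then show "y' \<in> Suc ` {i. i < length kap \<and> x' \<le> kap ! i}"
      using h by (auto intro!: image_eqI[where x="y' - 1"])
  qed (auto simp: row_def)
  then show ?thesis
    by (simp add: conj_def length_filter_conv_card card_image)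
qed

lemma hw_zero:
  "fst c < fst d \<or> snd c < snd d \<Longrightarrow> hook_walk lam q t c d = 0"
proof (induction lam q t c d rule: hook_walk.induct)
  case (1 lam q t c d)
  show ?case
  proof (subst hook_walk.simps, cases "armlen lam c = 0 \<and> leglen lam c = 0")
    case True then show "(if armlen lam c = 0 \<and> leglen lam c = 0 then if d = c then 1 else 0
      else \<Sum>c'\<in>arm lam c \<union> leg lam c. trans_prob lam q t c c' * hook_walk lam q t c' d) = 0"
      using "1.prems" by auto
  next
    case False
    have "\<forall>c'\<in>arm lam c \<union> leg lam c. hook_walk lam q t c' d = 0"
    proof
      fix c' assume c': "c' \<in> arm lam c \<union> leg lam c"
      then have "fst c' < fst d \<or> snd c' < snd d" using "1.prems"
        by (auto simp: arm_def leg_def)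
      then show "hook_walk lam q t c' d = 0" using "1.IH" False c' by blast
    qed
    then show "(if armlen lam c = 0 \<and> leglen lam c = 0 then if d = c then 1 else 0
      else \<Sum>c'\<in>arm lam c \<union> leg lam c. trans_prob lam q t c c' * hook_walk lam q t c' d) = 0"
      using False by simp
  qed
qed

lemma basic_facts:
  assumes "is_partition lam" and "in_U lam nu"
    and cs: "cells nu - cells lam = {(x, y)}"
  shows "1 \<le> x" "1 \<le> y" "row lam y = x - 1" "row nu y = x"
    "\<And>y'. y' \<noteq> y \<Longrightarrow> 1 \<le> y' \<Longrightarrow> row nu y' = row lam y'"
    "conj lam x = y - 1" "conj nu x = y"
    "\<And>x'. x' \<noteq> x \<Longrightarrow> 1 \<le> x' \<Longrightarrow> conj nu x' = conj lam x'"
proof -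
  have pn: "is_partition nu" and sub: "cells lam \<subseteq> cells nu" using assms(2) by (auto simp: in_U_def)
  have cn: "cells nu = insert (x, y) (cells lam)" and nl: "(x, y) \<notin> cells lam"
    using cs sub by auto
  have mem: "\<And>a b kap. (a, b) \<in> cells kap \<longleftrightarrow> 1 \<le> a \<and> 1 \<le> b \<and> a \<le> row kap b"
    by (simp add: cells_def)
  have xy: "(x, y) \<in> cells nu" using cn by auto
  then have x1: "1 \<le> x" and y1: "1 \<le> y" and xn: "x \<le> row nu y" by (auto simp: mem)
  show "1 \<le> x" "1 \<le> y" by (fact x1, fact y1)
  have xl: "\<not> x \<le> row lam y" using nl x1 y1 mem by auto
  have mn: "\<And>a b. (a, b) \<in> cells nu \<longleftrightarrow> (a = x \<and> b = y) \<or> (a, b) \<in> cells lam"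
    using cn by auto
  show rl: "row lam y = x - 1"
  proof (cases "x \<ge> 2")
    case True
    then have "(x - 1, y) \<in> cells nu" using xn y1 mem by auto
    then have "(x - 1, y) \<in> cells lam" using mn True by auto
    then show ?thesis using xl mem by auto
  qed (use xl in auto)
  show "row nu y = x"
  proof (rule ccontr)
    assume "row nu y \<noteq> x"
    then have "(x + 1, y) \<in> cells nu" using xn y1 x1 mem by auto
    then have "(x + 1, y) \<in> cells lam" using mn by auto
    then show False using rl mem by auto
  qed
  show ro: "row nu y' = row lam y'" if "y' \<noteq> y" "1 \<le> y'" for y'
  proof -
    have "\<And>a. 1 \<le> a \<Longrightarrow> a \<le> row nu y' \<longleftrightarrow> a \<le> row lam y'"
      using mn[of _ y'] mem that by auto
    from this[of "row nu y'"] this[of "row lam y'"] show ?thesis by linarith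
  qed
  have "{y'. 1 \<le> y' \<and> x \<le> row lam y'} = {1..<y}"
  proof (rule set_eqI, rule iffI)
    fix y' assume "y' \<in> {y'. 1 \<le> y' \<and> x \<le> row lam y'}"
    then have h: "1 \<le> y'" "x \<le> row lam y'" by auto
    have "y' < y"
    proof (rule ccontr)
      assume "\<not> y' < y"
      then have "row lam y' \<le> row lam y" using row_mono[OF assms(1) y1] by simp
      then show False using h rl x1 by linarith
    qed
    then show "y' \<in> {1..<y}" using h by auto
  next
    fix y' assume "y' \<in> {1..<y}"
    then have h: "1 \<le> y'" "y' < y" by auto
    then have "row nu y \<le> row nu y'" using row_mono[OF pn] by simp
    then have "(x, y') \<in> cells nu" using xn h x1 mem by auto
    then have "(x, y') \<in> cells lam" using mn h by auto
    then show "y' \<in> {y'. 1 \<le> y' \<and> x \<le> row lam y'}" using mem by auto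
  qed
  then show "conj lam x = y - 1" using conj_card[OF x1] by simp
  have "{y'. 1 \<le> y' \<and> x \<le> row nu y'} = {1..y}"
  proof (rule set_eqI, rule iffI)
    fix y' assume "y' \<in> {y'. 1 \<le> y' \<and> x \<le> row nu y'}"
    then have h: "1 \<le> y'" "x \<le> row nu y'" by auto
    have "y' \<le> y"
    proof (rule ccontr)
      assume a: "\<not> y' \<le> y"
      then have "row lam y' \<le> row lam y" using row_mono[OF assms(1) y1] by simp
      moreover have "row nu y' = row lam y'" using ro[of y'] a h by simp
      ultimately show False using h rl x1 by linarith
    qed
    then show "y' \<in> {1..y}" using h by auto
  next
    fix y' assume "y' \<in> {1..y}"
    then have h: "1 \<le> y'" "y' \<le> y" by auto
    then have "row nu y \<le> row nu y'" using row_mono[OF pn] by simp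
    then show "y' \<in> {y'. 1 \<le> y' \<and> x \<le> row nu y'}" using xn h by auto
  qed
  then show "conj nu x = y" using conj_card[OF x1] by simp
  show "conj nu x' = conj lam x'" if "x' \<noteq> x" "1 \<le> x'" for x'
  proof -
    have "{y'. 1 \<le> y' \<and> x' \<le> row nu y'} = {y'. 1 \<le> y' \<and> x' \<le> row lam y'}"
      using mn[of x'] mem that by auto
    then show ?thesis using conj_card[OF that(2)] by metis
  qed
qed

lemma part1:
  fixes lam nu :: "nat list" and x y u :: nat and q t :: "'a::field"
  assumes "is_partition lam" and "in_U lam nu"
    and cs: "cells nu - cells lam = {(x, y)}"
    and "u \<ge> 1"
    and generic: "\<And>a l. (a, l) \<noteq> (0, 0) \<Longrightarrow> q ^ a * t ^ l \<noteq> 1"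
  shows "hook_walk lam q t (x + u, y) (x, y) =
           t ^ leglen lam (x + u, y) * (1 - q)
             / (1 - q ^ (armlen nu (x + u, y) + 1) * t ^ leglen nu (x + u, y))
           * (\<Prod>c'\<in>arm lam (x + u, y) - {(x, y)}.
                (1 - q ^ (armlen lam c' + 1) * t ^ leglen lam c')
                / (1 - q ^ (armlen nu c' + 1) * t ^ leglen nu c'))"
proof -
  note bf = basic_facts[OF assms(1,2,3)]
  define P where "P k = hook_walk lam q t (x + k, y) (x, y)" for k
  define L where "L k = leglen lam (x + k, y)" for k
  have nz: "1 - q ^ a * t ^ l \<noteq> 0" if "a \<ge> 1" for a l
    using generic[of a l] that by auto
  have al: "armlen lam (x + k, y) = k" for k using bf by (simp add: armlen_eq)
  have arm_k: "arm lam (x + k, y) = (\<lambda>i. (x + i, y)) ` {0..<k}" for k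
  proof (rule set_eqI, rule iffI)
    fix c assume "c \<in> arm lam (x + k, y)"
    then obtain i where "c = (i, y)" "x - 1 < i" "i < x + k" using bf(3) by (auto simp: arm_def)
    then show "c \<in> (\<lambda>i. (x + i, y)) ` {0..<k}" using bf(1)
      by (auto simp: image_iff intro!: bexI[where x="i - x"])
  qed (use bf(1,3) in \<open>auto simp: arm_def\<close>)
  have P0: "P 0 = 1"
  proof -
    have "armlen lam (x, y) = 0" "leglen lam (x, y) = 0" using bf by (auto simp: armlen_eq leglen_eq)
    then show ?thesis unfolding P_def by (subst hook_walk.simps) simp
  qed
  have Prec: "P k = t ^ L k * (1 - q) / (1 - q ^ k * t ^ L k) * (\<Sum>j<k. q ^ j * P j)"
    if k1: "k \<ge> 1" for k
  proof -
    let ?f = "\<lambda>c'. trans_prob lam q t (x + k, y) c' * hook_walk lam q t c' (x, y)"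
    have "P k = (\<Sum>c'\<in>arm lam (x + k, y) \<union> leg lam (x + k, y). ?f c')"
      unfolding P_def using al[of k] k1 by (subst hook_walk.simps) simp
    also have "\<dots> = (\<Sum>c'\<in>arm lam (x + k, y). ?f c')"
    proof (rule sum.mono_neutral_right)
      show "finite (arm lam (x + k, y) \<union> leg lam (x + k, y))" by (simp add: finite_arm finite_leg)
      show "\<forall>i\<in>arm lam (x + k, y) \<union> leg lam (x + k, y) - arm lam (x + k, y). ?f i = 0"
      proof
        fix i assume "i \<in> arm lam (x + k, y) \<union> leg lam (x + k, y) - arm lam (x + k, y)"
        then have "snd i < snd (x, y)" by (auto simp: leg_def)
        then have "hook_walk lam q t i (x, y) = 0" by (intro hw_zero) simp
        then show "?f i = 0" by simp
      qed
    qed auto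
    also have "\<dots> = (\<Sum>j\<in>{0..<k}. ?f (x + j, y))"
      by (simp add: arm_k sum.reindex inj_on_def)
    also have "\<dots> = (\<Sum>j<k. t ^ L k * (1 - q) / (1 - q ^ k * t ^ L k) * (q ^ j * P j))"
    proof (rule sum.cong)
      fix j assume "j \<in> {..<k}"
      then have "k - (x + k - (x + j)) = j" by auto
      then show "?f (x + j, y) = t ^ L k * (1 - q) / (1 - q ^ k * t ^ L k) * (q ^ j * P j)"
        by (simp add: trans_prob_def al L_def P_def Let_def)
    qed (auto)
    finally show ?thesis by (simp add: sum_distrib_left)
  qed
  have S: "(\<Sum>j<k. q ^ j * P j) = (\<Prod>i\<in>{1..<k}. (1 - q ^ (i + 1) * t ^ L i) / (1 - q ^ i * t ^ L i))"
    if "k \<ge> 1" for k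
    using that
  proof (induction k rule: dec_induct)
    case base then show ?case by (simp add: P0)
  next
    case (step k)
    let ?S = "\<Sum>j<k. q ^ j * P j"
    have d: "1 - q ^ k * t ^ L k \<noteq> 0" using nz step by simp
    have "(\<Sum>j<Suc k. q ^ j * P j) = ?S + q ^ k * (t ^ L k * (1 - q) / (1 - q ^ k * t ^ L k) * ?S)"
      using Prec[of k] step by simp
    also have "\<dots> = ?S * ((1 - q ^ (k + 1) * t ^ L k) / (1 - q ^ k * t ^ L k))"
      using d by (simp add: field_simps)
    finally show ?case using step by (simp add: prod.atLeastLessThan_Suc)
  qed
  have e1: "arm lam (x + u, y) - {(x, y)} = (\<lambda>i. (x + i, y)) ` {1..<u}"
    using assms(4) by (auto simp: arm_k image_iff)
  have rn: "armlen nu (x + i, y) = i - 1" for i using bf by (simp add: armlen_eq)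
  have ln: "leglen nu (x + i, y) = L i" if "i \<ge> 1" for i
    using bf(8)[of "x + i"] bf(1) that by (simp add: leglen_eq L_def)
  have "(\<Prod>c'\<in>arm lam (x + u, y) - {(x, y)}.
                (1 - q ^ (armlen lam c' + 1) * t ^ leglen lam c')
                / (1 - q ^ (armlen nu c' + 1) * t ^ leglen nu c'))
      = (\<Prod>i\<in>{1..<u}. (1 - q ^ (i + 1) * t ^ L i) / (1 - q ^ i * t ^ L i))"
    unfolding e1
  proof (subst prod.reindex)
    show "inj_on (\<lambda>i. (x + i, y)) {1..<u}" by (simp add: inj_on_def)
  next
    show "prod ((\<lambda>c'. (1 - q ^ (armlen lam c' + 1) * t ^ leglen lam c') /
          (1 - q ^ (armlen nu c' + 1) * t ^ leglen nu c')) \<circ> (\<lambda>i. (x + i, y))) {1..<u} =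
    (\<Prod>i = 1..<u. (1 - q ^ (i + 1) * t ^ L i) / (1 - q ^ i * t ^ L i))"
    proof (rule prod.cong)
      fix i assume "i \<in> {1..<u}"
      then have h1: "armlen nu (x + i, y) + 1 = i" and h2: "leglen nu (x + i, y) = L i" using rn ln by auto
      show "((\<lambda>c'. (1 - q ^ (armlen lam c' + 1) * t ^ leglen lam c') /
          (1 - q ^ (armlen nu c' + 1) * t ^ leglen nu c')) \<circ> (\<lambda>i. (x + i, y))) i =
          (1 - q ^ (i + 1) * t ^ L i) / (1 - q ^ i * t ^ L i)"
        unfolding comp_def al h1 h2 L_def by (rule refl)
    qed simp
  qed
  moreover have "armlen nu (x + u, y) + 1 = u" "leglen nu (x + u, y) = L u"
    using rn[of u] ln[of u] assms(4) by auto
  ultimately show ?thesis using Prec[OF assms(4)] S[OF assms(4)] by (simp add: P_def L_def)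
qed

lemma part2:
  fixes lam nu :: "nat list" and x y v :: nat and q t :: "'a::field"
  assumes "is_partition lam" and "in_U lam nu"
    and cs: "cells nu - cells lam = {(x, y)}"
    and "v \<ge> 1"
    and generic: "\<And>a l. (a, l) \<noteq> (0, 0) \<Longrightarrow> q ^ a * t ^ l \<noteq> 1"
  shows "hook_walk lam q t (x, y + v) (x, y) =
           (1 - t) / (1 - q ^ armlen nu (x, y + v) * t ^ (leglen nu (x, y + v) + 1))
           * (\<Prod>c''\<in>leg lam (x, y + v) - {(x, y)}.
                (1 - q ^ armlen lam c'' * t ^ (leglen lam c'' + 1))
                / (1 - q ^ armlen nu c'' * t ^ (leglen nu c'' + 1)))"
proof -
  note bf = basic_facts[OF assms(1,2,3)]
  define Q where "Q k = hook_walk lam q t (x, y + k) (x, y)" for k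
  define A where "A k = armlen lam (x, y + k)" for k
  have nz: "1 - q ^ a * t ^ l \<noteq> 0" if "l \<ge> 1" for a l
    using generic[of a l] that by auto
  have ll: "leglen lam (x, y + k) = k" for k using bf by (simp add: leglen_eq)
  have leg_k: "leg lam (x, y + k) = (\<lambda>i. (x, y + i)) ` {0..<k}" for k
  proof (rule set_eqI, rule iffI)
    fix c assume "c \<in> leg lam (x, y + k)"
    then obtain i where "c = (x, i)" "y - 1 < i" "i < y + k" using bf(6) by (auto simp: leg_def)
    then show "c \<in> (\<lambda>i. (x, y + i)) ` {0..<k}" using bf(2)
      by (auto simp: image_iff intro!: bexI[where x="i - y"])
  qed (use bf(2,6) in \<open>auto simp: leg_def\<close>)
  have Q0: "Q 0 = 1"
  proof -
    have "armlen lam (x, y) = 0" "leglen lam (x, y) = 0" using bf by (auto simp: armlen_eq leglen_eq)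
    then show ?thesis unfolding Q_def by (subst hook_walk.simps) simp
  qed
  have Qrec: "Q k = (1 - t) / (1 - q ^ A k * t ^ k) * (\<Sum>j<k. t ^ (k - 1 - j) * Q j)"
    if k1: "k \<ge> 1" for k
  proof -
    let ?f = "\<lambda>c'. trans_prob lam q t (x, y + k) c' * hook_walk lam q t c' (x, y)"
    have "Q k = (\<Sum>c'\<in>arm lam (x, y + k) \<union> leg lam (x, y + k). ?f c')"
      unfolding Q_def using ll[of k] k1 by (subst hook_walk.simps) simp
    also have "\<dots> = (\<Sum>c'\<in>leg lam (x, y + k). ?f c')"
    proof (rule sum.mono_neutral_right)
      show "finite (arm lam (x, y + k) \<union> leg lam (x, y + k))" by (simp add: finite_arm finite_leg)
      show "\<forall>i\<in>arm lam (x, y + k) \<union> leg lam (x, y + k) - leg lam (x, y + k). ?f i = 0"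
      proof
        fix i assume "i \<in> arm lam (x, y + k) \<union> leg lam (x, y + k) - leg lam (x, y + k)"
        then have "fst i < fst (x, y)" by (auto simp: arm_def)
        then have "hook_walk lam q t i (x, y) = 0" by (intro hw_zero) simp
        then show "?f i = 0" by simp
      qed
    qed auto
    also have "\<dots> = (\<Sum>j\<in>{0..<k}. ?f (x, y + j))"
      by (simp add: leg_k sum.reindex inj_on_def)
    also have "\<dots> = (\<Sum>j<k. (1 - t) / (1 - q ^ A k * t ^ k) * (t ^ (k - 1 - j) * Q j))"
    proof (rule sum.cong)
      fix j assume "j \<in> {..<k}"
      then have "y + k - (y + j) - 1 = k - 1 - j" "y + j \<noteq> y + k" by auto
      then show "?f (x, y + j) = (1 - t) / (1 - q ^ A k * t ^ k) * (t ^ (k - 1 - j) * Q j)"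
        by (simp add: trans_prob_def ll A_def Q_def Let_def)
    qed (auto)
    finally show ?thesis by (simp add: sum_distrib_left)
  qed
  have T: "(\<Sum>j<k. t ^ (k - 1 - j) * Q j) = (\<Prod>i\<in>{1..<k}. (1 - q ^ A i * t ^ (i + 1)) / (1 - q ^ A i * t ^ i))"
    if "k \<ge> 1" for k
    using that
  proof (induction k rule: dec_induct)
    case base then show ?case by (simp add: Q0)
  next
    case (step k)
    let ?S = "\<Sum>j<k. t ^ (k - 1 - j) * Q j"
    have d: "1 - q ^ A k * t ^ k \<noteq> 0" using nz step by simp
    have "(\<Sum>j<k. t ^ (Suc k - 1 - j) * Q j) = (\<Sum>j<k. t * (t ^ (k - 1 - j) * Q j))"
    proof (rule sum.cong)
      fix j assume "j \<in> {..<k}"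
      then have "Suc k - 1 - j = Suc (k - 1 - j)" by auto
      then show "t ^ (Suc k - 1 - j) * Q j = t * (t ^ (k - 1 - j) * Q j)" by simp
    qed simp
    then have "(\<Sum>j<Suc k. t ^ (Suc k - 1 - j) * Q j) = t * ?S + Q k"
      by (simp add: sum_distrib_left)
    also have "\<dots> = t * ?S + (1 - t) / (1 - q ^ A k * t ^ k) * ?S"
      using Qrec[of k] step by simp
    also have "\<dots> = ?S * ((1 - q ^ A k * t ^ (k + 1)) / (1 - q ^ A k * t ^ k))"
      using d by (simp add: field_simps)
    finally show ?case using step by (simp add: prod.atLeastLessThan_Suc)
  qed
  have e1: "leg lam (x, y + v) - {(x, y)} = (\<lambda>i. (x, y + i)) ` {1..<v}"
    using assms(4) by (auto simp: leg_k image_iff)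
  have ln: "leglen nu (x, y + i) = i - 1" for i using bf by (simp add: leglen_eq)
  have an: "armlen nu (x, y + i) = A i" if "i \<ge> 1" for i
    using bf(5)[of "y + i"] bf(2) that by (simp add: armlen_eq A_def)
  have "(\<Prod>c''\<in>leg lam (x, y + v) - {(x, y)}.
                (1 - q ^ armlen lam c'' * t ^ (leglen lam c'' + 1))
                / (1 - q ^ armlen nu c'' * t ^ (leglen nu c'' + 1)))
      = (\<Prod>i\<in>{1..<v}. (1 - q ^ A i * t ^ (i + 1)) / (1 - q ^ A i * t ^ i))"
    unfolding e1
  proof (subst prod.reindex)
    show "inj_on (\<lambda>i. (x, y + i)) {1..<v}" by (simp add: inj_on_def)
  next
    show "prod ((\<lambda>c''. (1 - q ^ armlen lam c'' * t ^ (leglen lam c'' + 1))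
                / (1 - q ^ armlen nu c'' * t ^ (leglen nu c'' + 1))) \<circ> (\<lambda>i. (x, y + i))) {1..<v} =
    (\<Prod>i = 1..<v. (1 - q ^ A i * t ^ (i + 1)) / (1 - q ^ A i * t ^ i))"
    proof (rule prod.cong)
      fix i assume "i \<in> {1..<v}"
      then have h1: "leglen nu (x, y + i) + 1 = i" and h2: "armlen nu (x, y + i) = A i" using ln an by auto
      show "((\<lambda>c''. (1 - q ^ armlen lam c'' * t ^ (leglen lam c'' + 1))
                / (1 - q ^ armlen nu c'' * t ^ (leglen nu c'' + 1))) \<circ> (\<lambda>i. (x, y + i))) i =
          (1 - q ^ A i * t ^ (i + 1)) / (1 - q ^ A i * t ^ i)"
        unfolding comp_def ll h1 h2 A_def by (rule refl)
    qed simp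
  qed
  moreover have "leglen nu (x, y + v) + 1 = v" "armlen nu (x, y + v) = A v"
    using ln[of v] an[of v] assms(4) by auto
  ultimately show ?thesis using Qrec[OF assms(4)] T[OF assms(4)] by (simp add: Q_def A_def)
qed

theorem lemma6p7:
  fixes lam nu :: "nat list" and x y u v :: nat and q t :: "'a::field"
  assumes "is_partition lam" and "in_U lam nu"
    and "cells nu - cells lam = {(x, y)}"
    and "u \<ge> 1" and "v \<ge> 1"
    and generic: "\<And>a l. (a, l) \<noteq> (0, 0) \<Longrightarrow> q ^ a * t ^ l \<noteq> 1"
  shows "(hook_walk lam q t (x + u, y) (x, y) =
           t ^ leglen lam (x + u, y) * (1 - q)
             / (1 - q ^ (armlen nu (x + u, y) + 1) * t ^ leglen nu (x + u, y))
           * (\<Prod>c'\<in>arm lam (x + u, y) - {(x, y)}.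
                (1 - q ^ (armlen lam c' + 1) * t ^ leglen lam c')
                / (1 - q ^ (armlen nu c' + 1) * t ^ leglen nu c')))
         \<and> (hook_walk lam q t (x, y + v) (x, y) =
           (1 - t) / (1 - q ^ armlen nu (x, y + v) * t ^ (leglen nu (x, y + v) + 1))
           * (\<Prod>c''\<in>leg lam (x, y + v) - {(x, y)}.
                (1 - q ^ armlen lam c'' * t ^ (leglen lam c'' + 1))
                / (1 - q ^ armlen nu c'' * t ^ (leglen nu c'' + 1))))"
  using part1[OF assms(1,2,3,4) generic] part2[OF assms(1,2,3,5) generic] by blast

end
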